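(* In the setting below, consider the moment selection criterion $MSC(S)=J_n(S)-h(|S|)\kappa_n$, where $h$ is strictly increasing, $\lim_{n\to\infty}\kappa_n=\infty$ and $\kappa_n=o(n)$, and let the selected moment set be the minimizer of $MSC(S)$ over $S\in\mathscr{S}$. Then $MSC$ selects the full moment set with probability approaching one.
   Context: Setting: $\theta\in\Theta\subseteq\mathbb{R}^r$; $f=(g',h')'$ a $(p+q)$-vector of moment functions; triangular array $\{Z_{ni}\}$ with $E[g(Z_{ni},\theta_0)]=0$, $E[h(Z_{ni},\theta_0)]=n^{-1/2}\tau$, $\{f(Z_{ni},\theta_0)\}$ uniformly integrable, $Z_{ni}\to_dZ_i$ identically distributed (law $Z$); $f_n(\theta)=n^{-1}\sum_if(Z_{ni},\theta)$. $\mathscr{S}$ is a finite collection of moment sets (subsets of the $p+q$ moment conditions, each with $|S|>r$, where $|S|$ is the number of moment conditions) that contains the full moment set of all $p+q$ conditions. For each $S\in\mathscr{S}$ with zero-one selection matrix $\Xi_S$ and weight $\widetilde{W}_S$, $\widehat{\theta}_S=\arg\min_\theta[\Xi_Sf_n(\theta)]'\widetilde{W}_S[\Xi_Sf_n(\theta)]$, and: $\theta_0$ interior to compact $\Theta$; $\widetilde{W}_S\to_pW_S>0$; $W_S\Xi_SE[f(Z,\theta)]=0$ iff $\theta=\theta_0$; $E[f(Z,\theta)]$ continuous; $\sup_\theta\|f_n(\theta)-E[f(Z,\theta)]\|\to_p0$; $f$ a.s. differentiable near $\theta_0$; $\sup_\theta\|\nabla f_n(\theta)-E[\nabla f(Z,\theta)]\|\to_p0$;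 $\sqrt{n}f_n(\theta_0)\to_dM+(0',\tau')'$ with $M\sim N(0,\Omega)$; $F_S'W_SF_S$ invertible, where $F_S=\Xi_S(E[\nabla_\theta g(Z,\theta_0)]',E[\nabla_\theta h(Z,\theta_0)]')'$. $J_n(S)=n[\Xi_Sf_n(\widehat{\theta}_S)]'\widehat{\Omega}_S^{-1}[\Xi_Sf_n(\widehat{\theta}_S)]$ with $\widehat{\Omega}_S^{-1}$ consistent for $\Omega_S^{-1}$, $\Omega_S=\Xi_S\mathrm{Var}[f(Z,\theta_0)]\Xi_S'$ positive definite. *)

theory Defs
  imports "HOL-Probability.Probability"
begin

text \<open>Outer probability (handles possibly non-measurable events such as those
  involving suprema over the parameter space or argmin estimators).\<close>
definition outer_prob :: "'a measure \<Rightarrow> 'a set \<Rightarrow> real" where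
  "outer_prob M A = Inf (measure M ` {B \<in> sets M. A \<inter> space M \<subseteq> B})"

definition conv_in_prob :: "'a measure \<Rightarrow> (nat \<Rightarrow> 'a \<Rightarrow> 'b::metric_space) \<Rightarrow> 'b \<Rightarrow> bool" where
  "conv_in_prob M X c \<longleftrightarrow>
     (\<forall>e>0. (\<lambda>n. outer_prob M {\<omega> \<in> space M. dist (X n \<omega>) c > e}) \<longlonglongrightarrow> 0)"

definition conv_in_dist :: "'a measure \<Rightarrow> (nat \<Rightarrow> 'a \<Rightarrow> 'b::metric_space) \<Rightarrow> 'b measure \<Rightarrow> bool" where
  "conv_in_dist M X L \<longleftrightarrow>
     (\<forall>\<phi>::'b \<Rightarrow> real. continuous_on UNIV \<phi> \<and> bounded (range \<phi>) \<longrightarrow>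
        (\<lambda>n. \<integral>\<omega>. \<phi> (X n \<omega>) \<partial>M) \<longlonglongrightarrow> (\<integral>x. \<phi> x \<partial>L))"

definition gaussian_vec :: "(real^'m) measure \<Rightarrow> real^'m \<Rightarrow> ('m \<Rightarrow> 'm \<Rightarrow> real) \<Rightarrow> bool" where
  "gaussian_vec L mu Sig \<longleftrightarrow> prob_space L \<and> sets L = sets borel \<and>
     (\<forall>t::real^'m. (\<integral>x. cis (t \<bullet> x) \<partial>L) =
        cis (t \<bullet> mu) * complex_of_real (exp (- (\<Sum>i\<in>UNIV. \<Sum>j\<in>UNIV. t$i * Sig i j * t$j) / 2)))"

definition unif_integrable :: "'a measure \<Rightarrow> ('i \<Rightarrow> 'a \<Rightarrow> 'b::{banach,second_countable_topology}) \<Rightarrow> 'i set \<Rightarrow> bool" where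
  "unif_integrable M X I \<longleftrightarrow> (\<forall>k\<in>I. integrable M (X k)) \<and>
     (\<forall>e>0. \<exists>c. \<forall>k\<in>I. (\<integral>\<omega>. (if norm (X k \<omega>) > c then norm (X k \<omega>) else 0) \<partial>M) \<le> e)"

definition pos_def_on :: "'m set \<Rightarrow> ('m \<Rightarrow> 'm \<Rightarrow> real) \<Rightarrow> bool" where
  "pos_def_on S A \<longleftrightarrow> (\<forall>i\<in>S. \<forall>j\<in>S. A i j = A j i) \<and>
     (\<forall>v. (\<exists>i\<in>S. v i \<noteq> 0) \<longrightarrow> (\<Sum>i\<in>S. \<Sum>j\<in>S. v i * A i j * v j) > 0)"

definition sample_mom :: "(nat \<Rightarrow> nat \<Rightarrow> 'a \<Rightarrow> 'z) \<Rightarrow> ('z \<Rightarrow> 'p \<Rightarrow> 'v::real_vector) \<Rightarrow> nat \<Rightarrow> 'a \<Rightarrow> 'p \<Rightarrow> 'v" where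
  "sample_mom Z f n \<omega> \<theta> = (1 / real n) *\<^sub>R (\<Sum>i<n. f (Z n i \<omega>) \<theta>)"

text \<open>Quadratic form [Xi_S v]' A [Xi_S v] for the moment subset S.\<close>
definition quad_on :: "'m set \<Rightarrow> real^'m \<Rightarrow> ('m \<Rightarrow> 'm \<Rightarrow> real) \<Rightarrow> real" where
  "quad_on S v A = (\<Sum>i\<in>S. \<Sum>j\<in>S. v $ i * A i j * v $ j)"

definition cov_mat :: "'z measure \<Rightarrow> ('z \<Rightarrow> real^'m) \<Rightarrow> 'm \<Rightarrow> 'm \<Rightarrow> real" where
  "cov_mat P X i j = (\<integral>z. (X z $ i - (\<integral>y. X y \<partial>P) $ i) * (X z $ j - (\<integral>y. X y \<partial>P) $ j) \<partial>P)"

end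

theory Submission
  imports Defs
begin


lemma outer_prob_le:
  assumes "B \<in> sets M" "A \<inter> space M \<subseteq> B"
  shows "outer_prob M A \<le> measure M B"
  unfolding outer_prob_def
  by (rule cInf_lower) (use assms in \<open>auto intro: bdd_belowI[where m=0]\<close>)

lemma outer_prob_nonneg: "outer_prob M A \<ge> 0"
  unfolding outer_prob_def
  by (rule cInf_greatest) auto

lemma outer_prob_mono:
  assumes "A \<subseteq> A'"
  shows "outer_prob M A \<le> outer_prob M A'"
  unfolding outer_prob_def
  by (rule cInf_superset_mono) (use assms in \<open>auto intro: bdd_belowI[where m=0]\<close>)

lemma outer_prob_approx:
  assumes "e > 0"
  obtains B where "B \<in> sets M" "A \<inter> space M \<subseteq> B" "measure M B < outer_prob M A + e"
proof -
  have ne: "measure M ` {B \<in> sets M. A \<inter> space M \<subseteq> B} \<noteq> {}" by auto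
  have "Inf (measure M ` {B \<in> sets M. A \<inter> space M \<subseteq> B}) < outer_prob M A + e"
    using assms unfolding outer_prob_def by simp
  from cInf_lessD[OF ne this] show ?thesis using that by blast
qed

lemma outer_prob_Un:
  assumes "finite_measure M"
  shows "outer_prob M (A \<union> A') \<le> outer_prob M A + outer_prob M A'"
proof (rule field_le_epsilon)
  fix e :: real assume e: "e > 0"
  obtain B where B: "B \<in> sets M" "A \<inter> space M \<subseteq> B" "measure M B < outer_prob M A + e/2"
    using outer_prob_approx[of "e/2"] e by (metis half_gt_zero)
  obtain B' where B': "B' \<in> sets M" "A' \<inter> space M \<subseteq> B'" "measure M B' < outer_prob M A' + e/2"
    using outer_prob_approx[of "e/2"] e by (metis half_gt_zero)
  have "outer_prob M (A \<union> A') \<le> measure M (B \<union> B')"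
    using B B' by (intro outer_prob_le) auto
  also have "\<dots> \<le> measure M B + measure M B'"
    using B B' assms by (intro measure_subadditive) (auto simp: finite_measure.emeasure_finite)
  finally show "outer_prob M (A \<union> A') \<le> outer_prob M A + outer_prob M A' + e"
    using B B' by linarith
qed

lemma outer_prob_UN:
  assumes "finite_measure M" "finite I"
  shows "outer_prob M (\<Union>i\<in>I. A i) \<le> (\<Sum>i\<in>I. outer_prob M (A i))"
  using assms(2)
proof (induction I rule: finite_induct)
  case empty
  have "outer_prob M {} \<le> measure M {}" by (rule outer_prob_le) auto
  then show ?case by simp
next
  case (insert x F)
  have "outer_prob M (\<Union>i\<in>insert x F. A i) = outer_prob M (A x \<union> (\<Union>i\<in>F. A i))" by simp
  also have "\<dots> \<le> outer_prob M (A x) + outer_prob M (\<Union>i\<in>F. A i)"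
    by (rule outer_prob_Un[OF assms(1)])
  also have "\<dots> \<le> outer_prob M (A x) + (\<Sum>i\<in>F. outer_prob M (A i))" using insert by simp
  finally show ?case using insert by simp
qed

lemma outer_prob_meas:
  assumes "A \<in> sets M"
  shows "outer_prob M A \<le> measure M A"
  using assms sets.sets_into_space[OF assms] by (intro outer_prob_le) auto

lemma tendsto_outer_UN:
  assumes "finite_measure M" "finite I" "\<And>i. i \<in> I \<Longrightarrow> (\<lambda>n. outer_prob M (A i n)) \<longlonglongrightarrow> 0"
  shows "(\<lambda>n. outer_prob M (\<Union>i\<in>I. A i n)) \<longlonglongrightarrow> 0"
proof (rule tendsto_sandwich[where f="\<lambda>_. 0" and h="\<lambda>n. \<Sum>i\<in>I. outer_prob M (A i n)"])
  show "\<forall>\<^sub>F n in sequentially. 0 \<le> outer_prob M (\<Union>i\<in>I. A i n)"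
    by (simp add: outer_prob_nonneg)
  show "\<forall>\<^sub>F n in sequentially. outer_prob M (\<Union>i\<in>I. A i n) \<le> (\<Sum>i\<in>I. outer_prob M (A i n))"
    using outer_prob_UN[OF assms(1,2)] by simp
  show "(\<lambda>n. \<Sum>i\<in>I. outer_prob M (A i n)) \<longlonglongrightarrow> 0"
    by (rule tendsto_null_sum) (rule assms(3))
qed simp

lemma eps_tendsto:
  fixes a :: "nat \<Rightarrow> real"
  assumes "\<And>n. a n \<ge> 0" "\<And>e. e > 0 \<Longrightarrow> eventually (\<lambda>n. a n \<le> e) sequentially"
  shows "a \<longlonglongrightarrow> 0"
proof (rule order_tendstoI)
  fix y :: real assume "y < 0" then show "eventually (\<lambda>n. y < a n) sequentially"
    using assms(1) by (auto intro: always_eventually less_le_trans)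
next
  fix y :: real assume y: "0 < y"
  show "eventually (\<lambda>n. a n < y) sequentially"
    using assms(2)[of "y/2"] y by (auto elim: eventually_mono)
qed



definition phiR :: "real \<Rightarrow> real^'m \<Rightarrow> real" where
  "phiR R x = min 1 (max 0 (norm x - R))"

lemma phiR_cont: "continuous_on UNIV (phiR R)"
  unfolding phiR_def by (intro continuous_intros)

lemma phiR_bnd: "bounded (range (phiR R))"
  unfolding bounded_iff phiR_def by (intro exI[of _ 1]) auto

lemma tight:
  fixes X :: "nat \<Rightarrow> 'a \<Rightarrow> real^'m"
  assumes M: "prob_space M" and L: "prob_space L" "sets L = sets borel"
    and Xm: "\<And>n. X n \<in> borel_measurable M"
    and cd: "conv_in_dist M X L" and e: "e > 0"
  shows "\<exists>R\<ge>0. eventually (\<lambda>n. measure M {\<omega>\<in>space M. norm (X n \<omega>) > R} \<le> e) sequentially"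
proof -
  have meas: "phiR R \<in> borel_measurable L" for R
    using borel_measurable_continuous_onI[OF phiR_cont] measurable_cong_sets[OF L(2) refl] by blast
  have "(\<lambda>k. \<integral>x. phiR (real k) x \<partial>L) \<longlonglongrightarrow> (\<integral>x. 0 \<partial>L)"
  proof (rule integral_dominated_convergence[where w="\<lambda>_. 1"])
    show "(\<lambda>x. 0::real) \<in> borel_measurable L" by simp
    show "\<And>k. phiR (real k) \<in> borel_measurable L" by (rule meas)
    show "integrable L (\<lambda>_. 1::real)" using L(1) by (simp add: prob_space_def finite_measure.integrable_const)
    show "AE x in L. (\<lambda>k. phiR (real k) x) \<longlonglongrightarrow> 0"
    proof (rule AE_I2)
      fix x :: "real^'m"
      obtain N :: nat where N: "norm x < real N" using reals_Archimedean2 by blast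
      have "eventually (\<lambda>k. phiR (real k) x = 0) sequentially"
        unfolding eventually_sequentially
        by (intro exI[of _ N]) (use N in \<open>auto simp: phiR_def\<close>)
      then show "(\<lambda>k. phiR (real k) x) \<longlonglongrightarrow> 0" by (rule tendsto_eventually)
    qed
    show "\<And>k. AE x in L. norm (phiR (real k) x) \<le> 1" by (auto simp: phiR_def)
  qed
  then have "(\<lambda>k. \<integral>x. phiR (real k) x \<partial>L) \<longlonglongrightarrow> 0" by simp
  then obtain k where k: "(\<integral>x. phiR (real k) x \<partial>L) < e/2"
    using e by (metis (no_types, lifting) half_gt_zero order_tendstoD(2) eventually_sequentially order.refl)
  have "(\<lambda>n. \<integral>\<omega>. phiR (real k) (X n \<omega>) \<partial>M) \<longlonglongrightarrow> (\<integral>x. phiR (real k) x \<partial>L)"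
    using cd phiR_cont phiR_bnd unfolding conv_in_dist_def by blast
  then have ev: "eventually (\<lambda>n. (\<integral>\<omega>. phiR (real k) (X n \<omega>) \<partial>M) < e) sequentially"
  proof -
    have "(\<integral>x. phiR (real k) x \<partial>L) < e" using k e by linarith
    from order_tendstoD(2)[OF \<open>(\<lambda>n. \<integral>\<omega>. phiR (real k) (X n \<omega>) \<partial>M) \<longlonglongrightarrow> _\<close> this] show ?thesis .
  qed
  show ?thesis
  proof (intro exI[of _ "real k + 1"] conjI)
    show "eventually (\<lambda>n. measure M {\<omega>\<in>space M. norm (X n \<omega>) > real k + 1} \<le> e) sequentially"
      using ev
    proof (rule eventually_mono)
      fix n assume n: "(\<integral>\<omega>. phiR (real k) (X n \<omega>) \<partial>M) < e"
      let ?A = "{\<omega>\<in>space M. norm (X n \<omega>) > real k + 1}"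
      have Am: "?A \<in> sets M" using Xm[of n] by measurable
      have pm: "(\<lambda>\<omega>. phiR (real k) (X n \<omega>)) \<in> borel_measurable M"
        using borel_measurable_continuous_onI[OF phiR_cont] Xm[of n] by (rule measurable_compose[rotated])
      have "measure M ?A = (\<integral>\<omega>. indicator ?A \<omega> \<partial>M)"
        using Am sets.sets_into_space[OF Am] by (simp add: Int_absorb2)
      also have "\<dots> \<le> (\<integral>\<omega>. phiR (real k) (X n \<omega>) \<partial>M)"
      proof (rule integral_mono)
        show "integrable M (indicator ?A :: 'a \<Rightarrow> real)"
          using Am M by (intro finite_measure.integrable_const_bound[where B=1])
             (auto simp: prob_space_def)
        show "integrable M (\<lambda>\<omega>. phiR (real k) (X n \<omega>))"
          using pm M by (intro finite_measure.integrable_const_bound[where B=1])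
             (auto simp: prob_space_def phiR_def)
        show "\<And>\<omega>. \<omega> \<in> space M \<Longrightarrow> indicator ?A \<omega> \<le> phiR (real k) (X n \<omega>)"
          by (auto simp: indicator_def phiR_def)
      qed
      finally show "measure M ?A \<le> e" using n by simp
    qed
  qed simp
qed



definition nS :: "'m set \<Rightarrow> real^'m \<Rightarrow> real" where
  "nS S v = (\<Sum>i\<in>S. (v$i)\<^sup>2)"

lemma nS_nonneg: "nS S v \<ge> 0" unfolding nS_def by (intro sum_nonneg) auto

lemma norm_sq_vec: "(norm (v::real^'m))\<^sup>2 = (\<Sum>i\<in>UNIV. (v$i)\<^sup>2)"
  by (simp add: norm_vec_def L2_set_def sum_nonneg)

lemma nS_le_norm: "nS S v \<le> (norm v)\<^sup>2"
proof -
  have "nS S v \<le> (\<Sum>i\<in>UNIV. (v$i)\<^sup>2)" unfolding nS_def by (intro sum_mono2) auto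
  also have "\<dots> = (norm v)\<^sup>2" by (rule norm_sq_vec[symmetric])
  finally show ?thesis .
qed

lemma comp_le_nS:
  assumes "finite S" "i \<in> S" shows "\<bar>v$i\<bar> \<le> sqrt (nS S v)"
proof -
  have "(v$i)\<^sup>2 \<le> nS S v" unfolding nS_def using assms by (intro member_le_sum) auto
  then show ?thesis by (metis real_sqrt_abs real_sqrt_le_mono)
qed

lemma quad_bound:
  assumes "finite S"
  shows "\<bar>quad_on S v A\<bar> \<le> (\<Sum>i\<in>S. \<Sum>j\<in>S. \<bar>A i j\<bar>) * nS S v"
proof -
  have "\<bar>quad_on S v A\<bar> \<le> (\<Sum>i\<in>S. \<Sum>j\<in>S. \<bar>v$i * A i j * v$j\<bar>)"
    unfolding quad_on_def by (rule order.trans[OF sum_abs sum_mono]) (rule sum_abs)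
  also have "\<dots> \<le> (\<Sum>i\<in>S. \<Sum>j\<in>S. \<bar>A i j\<bar> * nS S v)"
  proof (intro sum_mono)
    fix i j assume ij: "i \<in> S" "j \<in> S"
    have "\<bar>v$i\<bar> * \<bar>v$j\<bar> \<le> sqrt (nS S v) * sqrt (nS S v)"
      by (intro mult_mono comp_le_nS assms ij) (auto simp: nS_nonneg)
    also have "\<dots> = nS S v" using nS_nonneg[of S v] by (simp add: abs_of_nonneg)
    finally have "\<bar>v$i\<bar> * \<bar>v$j\<bar> \<le> nS S v" .
    then have "\<bar>A i j\<bar> * (\<bar>v$i\<bar> * \<bar>v$j\<bar>) \<le> \<bar>A i j\<bar> * nS S v"
      by (intro mult_left_mono) auto
    then show "\<bar>v$i * A i j * v$j\<bar> \<le> \<bar>A i j\<bar> * nS S v"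
      by (simp add: abs_mult algebra_simps)
  qed
  also have "\<dots> = (\<Sum>i\<in>S. \<Sum>j\<in>S. \<bar>A i j\<bar>) * nS S v"
    by (simp add: sum_distrib_right)
  finally show ?thesis .
qed

lemma quad_diff: "quad_on S v A - quad_on S v B = quad_on S v (\<lambda>i j. A i j - B i j)"
  unfolding quad_on_def by (simp add: sum_subtractf[symmetric] algebra_simps)

lemma pd_lower:
  fixes W :: "'m::finite \<Rightarrow> 'm \<Rightarrow> real"
  assumes S: "S \<noteq> {}" and pd: "pos_def_on S W"
  shows "\<exists>l>0. \<forall>v. quad_on S v W \<ge> l * nS S v"
proof -
  have fS: "finite S" by simp
  define K where "K = {x::real^'m. nS S x = 1 \<and> (\<forall>i. i \<notin> S \<longrightarrow> x$i = 0)}"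
  have contq: "continuous_on A (\<lambda>x::real^'m. quad_on S x W)" for A
    unfolding quad_on_def by (intro continuous_intros)
  have contn: "continuous_on A (\<lambda>x::real^'m. nS S x)" for A
    unfolding nS_def by (intro continuous_intros)
  have "compact K"
  proof (rule compact_eq_bounded_closed[THEN iffD2], rule conjI)
    show "bounded K" unfolding bounded_iff
    proof (intro exI[of _ 1] ballI)
      fix x assume x: "x \<in> K"
      have "(norm x)\<^sup>2 = (\<Sum>i\<in>UNIV. (x$i)\<^sup>2)" by (rule norm_sq_vec)
      also have "\<dots> = (\<Sum>i\<in>S. (x$i)\<^sup>2)" using x unfolding K_def by (intro sum.mono_neutral_right) auto
      also have "\<dots> = 1" using x unfolding K_def nS_def by simp
      finally show "norm x \<le> 1" by (metis abs_norm_cancel real_sqrt_abs real_sqrt_one order.refl)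
    qed
    have "K = {x. nS S x = 1} \<inter> (\<Inter>i\<in>-S. {x. x$i = 0})" unfolding K_def by auto
    moreover have "closed {x::real^'m. nS S x = 1}"
      using contn by (intro closed_Collect_eq) (auto intro: continuous_intros)
    moreover have "closed (\<Inter>i\<in>-S. {x::real^'m. x$i = 0})"
      by (intro closed_INT ballI closed_Collect_eq) (auto intro: continuous_intros)
    ultimately show "closed K" by auto
  qed
  obtain i0 where i0: "i0 \<in> S" using S by blast
  have "(\<Sum>i\<in>S. ((axis i0 1 :: real^'m)$i)\<^sup>2) = (\<Sum>i\<in>S. if i = i0 then 1 else 0)"
    by (intro sum.cong) (auto simp: axis_def)
  also have "\<dots> = 1" using i0 by (simp add: sum.delta)
  finally have "axis i0 1 \<in> K" unfolding K_def nS_def using i0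
    by (auto simp: axis_def)
  then have "K \<noteq> {}" by blast
  from continuous_attains_inf[OF \<open>compact K\<close> this contq]
  obtain x where x: "x \<in> K" "\<And>y. y \<in> K \<Longrightarrow> quad_on S x W \<le> quad_on S y W" by blast
  have "\<exists>i\<in>S. x$i \<noteq> 0"
  proof (rule ccontr)
    assume "\<not> ?thesis" then have "nS S x = 0" unfolding nS_def by simp
    with x(1) show False unfolding K_def by simp
  qed
  then have lpos: "quad_on S x W > 0"
    using pd unfolding pos_def_on_def quad_on_def by auto
  show ?thesis
  proof (intro exI[of _ "quad_on S x W"] conjI allI lpos)
    fix v :: "real^'m"
    show "quad_on S x W * nS S v \<le> quad_on S v W"
    proof (cases "nS S v = 0")
      case True
      then have "\<forall>i\<in>S. v$i = 0" unfolding nS_def using sum_nonneg_eq_0_iff[OF fS, of "\<lambda>i. (v$i)\<^sup>2"] by auto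
      then have "quad_on S v W = 0" unfolding quad_on_def by simp
      then show ?thesis using True by simp
    next
      case False
      define t where "t = nS S v"
      have t: "t > 0" using False nS_nonneg[of S v] unfolding t_def by linarith
      define s where "s = sqrt t"
      have s: "s > 0" "s * s = t" using t unfolding s_def by auto
      define y where "y = (\<chi> i. if i \<in> S then v$i / s else 0)"
      have "nS S y = (\<Sum>i\<in>S. (v$i)\<^sup>2 / t)" unfolding nS_def y_def
        by (intro sum.cong) (auto simp: power_divide s(2)[symmetric] power2_eq_square)
      also have "\<dots> = 1" using t unfolding t_def by (simp add: sum_divide_distrib[symmetric] nS_def)
      finally have "y \<in> K" unfolding K_def y_def by auto
      have "quad_on S y W = (\<Sum>i\<in>S. \<Sum>j\<in>S. v$i * W i j * v$j / t)"
        unfolding quad_on_def y_def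
        by (intro sum.cong refl) (auto simp: s(2)[symmetric])
      also have "\<dots> = quad_on S v W / t"
        unfolding quad_on_def by (simp add: sum_divide_distrib)
      finally have "quad_on S x W \<le> quad_on S v W / t" using x(2)[OF \<open>y \<in> K\<close>] by simp
      then show ?thesis using t unfolding t_def by (simp add: pos_le_divide_eq)
    qed
  qed
qed



lemma sum2_bound:
  assumes "\<And>i j. i \<in> S \<Longrightarrow> j \<in> S \<Longrightarrow> \<bar>D i j\<bar> \<le> (d::real)"
  shows "(\<Sum>i\<in>S. \<Sum>j\<in>S. \<bar>D i j\<bar>) \<le> real (card S) * (real (card S) * d)"
proof -
  have "(\<Sum>i\<in>S. \<Sum>j\<in>S. \<bar>D i j\<bar>) \<le> (\<Sum>i\<in>S. real (card S) * d)"
    by (intro sum_mono) (use sum_bounded_above[of S "\<lambda>j. \<bar>D _ j\<bar>" d] assms in auto)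
  then show ?thesis by simp
qed

lemma det_bound:
  fixes S :: "'m::finite set"
  assumes l2: "l2 > 0" and pd: "\<And>v. quad_on S v W \<ge> 2 * l2 * nS S v"
    and dW: "(\<Sum>i\<in>S. \<Sum>j\<in>S. \<bar>Wt i j - W i j\<bar>) \<le> l2"
    and dO: "(\<Sum>i\<in>S. \<Sum>j\<in>S. \<bar>Oh i j - Oi i j\<bar>) \<le> 1"
    and am: "quad_on S u1 Wt \<le> quad_on S u0 Wt"
  shows "\<bar>quad_on S u1 Oh\<bar> \<le> ((\<Sum>i\<in>S. \<Sum>j\<in>S. \<bar>Oi i j\<bar>) + 1) * ((\<Sum>i\<in>S. \<Sum>j\<in>S. \<bar>W i j\<bar>) + l2) / l2 * nS S u0"
proof -
  have fS: "finite S" by simp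
  let ?KW = "(\<Sum>i\<in>S. \<Sum>j\<in>S. \<bar>W i j\<bar>)" and ?KO = "(\<Sum>i\<in>S. \<Sum>j\<in>S. \<bar>Oi i j\<bar>)"
  have dev: "\<bar>quad_on S u Wt - quad_on S u W\<bar> \<le> l2 * nS S u" for u
  proof -
    have "\<bar>quad_on S u Wt - quad_on S u W\<bar> = \<bar>quad_on S u (\<lambda>i j. Wt i j - W i j)\<bar>"
      by (simp add: quad_diff)
    also have "\<dots> \<le> (\<Sum>i\<in>S. \<Sum>j\<in>S. \<bar>Wt i j - W i j\<bar>) * nS S u" by (rule quad_bound[OF fS])
    also have "\<dots> \<le> l2 * nS S u" by (intro mult_right_mono dW nS_nonneg)
    finally show ?thesis .
  qed
  have n1: "l2 * nS S u1 \<le> quad_on S u1 Wt" using dev[of u1] pd[of u1] by linarith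
  have "quad_on S u0 W \<le> ?KW * nS S u0" using quad_bound[OF fS, of u0 W] by linarith
  then have n0: "quad_on S u0 Wt \<le> (?KW + l2) * nS S u0" using dev[of u0] by (simp add: algebra_simps)
  have r: "nS S u1 \<le> (?KW + l2) / l2 * nS S u0"
    using n1 n0 am l2 by (simp add: field_simps)
  have "(\<Sum>i\<in>S. \<Sum>j\<in>S. \<bar>Oh i j\<bar>) \<le> (\<Sum>i\<in>S. \<Sum>j\<in>S. \<bar>Oi i j\<bar> + \<bar>Oh i j - Oi i j\<bar>)"
    by (intro sum_mono) auto
  also have "\<dots> = ?KO + (\<Sum>i\<in>S. \<Sum>j\<in>S. \<bar>Oh i j - Oi i j\<bar>)" by (simp add: sum.distrib)
  finally have kO: "(\<Sum>i\<in>S. \<Sum>j\<in>S. \<bar>Oh i j\<bar>) \<le> ?KO + 1" using dO by linarith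
  have "\<bar>quad_on S u1 Oh\<bar> \<le> (\<Sum>i\<in>S. \<Sum>j\<in>S. \<bar>Oh i j\<bar>) * nS S u1" by (rule quad_bound[OF fS])
  also have "\<dots> \<le> (?KO + 1) * nS S u1" by (intro mult_right_mono kO nS_nonneg)
  also have "\<dots> \<le> (?KO + 1) * ((?KW + l2) / l2 * nS S u0)"
    by (intro mult_left_mono r) (auto intro: add_nonneg_nonneg sum_nonneg)
  finally show ?thesis by simp
qed

lemma J_Op:
  fixes S :: "'m::finite set" and M :: "'a measure"
    and u0 u1 X :: "nat \<Rightarrow> 'a \<Rightarrow> real^'m"
    and Wt Oh :: "nat \<Rightarrow> 'a \<Rightarrow> 'm \<Rightarrow> 'm \<Rightarrow> real" and W Oi :: "'m \<Rightarrow> 'm \<Rightarrow> real"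
    and c :: "nat \<Rightarrow> real"
  assumes M: "prob_space M" and S: "S \<noteq> {}" and pd: "pos_def_on S W"
    and am: "\<And>n \<omega>. \<omega> \<in> space M \<Longrightarrow> quad_on S (u1 n \<omega>) (Wt n \<omega>) \<le> quad_on S (u0 n \<omega>) (Wt n \<omega>)"
    and X: "\<And>n \<omega>. (norm (X n \<omega>))\<^sup>2 = real n * (norm (u0 n \<omega>))\<^sup>2"
    and tight: "\<And>e. e > 0 \<Longrightarrow> \<exists>R\<ge>0. eventually (\<lambda>n. outer_prob M {\<omega>\<in>space M. norm (X n \<omega>) > R} \<le> e) sequentially"
    and Wc: "\<forall>i\<in>S. \<forall>j\<in>S. conv_in_prob M (\<lambda>n \<omega>. Wt n \<omega> i j) (W i j)"
    and Oc: "\<forall>i\<in>S. \<forall>j\<in>S. conv_in_prob M (\<lambda>n \<omega>. Oh n \<omega> i j) (Oi i j)"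
    and c: "filterlim c at_top sequentially"
  shows "(\<lambda>n. outer_prob M {\<omega>\<in>space M. \<bar>real n * quad_on S (u1 n \<omega>) (Oh n \<omega>)\<bar> > c n}) \<longlonglongrightarrow> 0"
proof -
  have fS: "finite S" by simp
  have fin: "finite_measure M" using M by (simp add: prob_space_def)
  obtain l where l: "l > 0" "\<And>v. quad_on S v W \<ge> l * nS S v" using pd_lower[OF S pd] by blast
  define l2 where "l2 = l / 2"
  have l2: "l2 > 0" "\<And>v. quad_on S v W \<ge> 2 * l2 * nS S v" using l unfolding l2_def by auto
  define k where "k = real (card S) * real (card S)"
  have k: "k > 0" unfolding k_def using S fS by (simp add: card_gt_0_iff)
  define KW where "KW = (\<Sum>i\<in>S. \<Sum>j\<in>S. \<bar>W i j\<bar>)"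
  define KO where "KO = (\<Sum>i\<in>S. \<Sum>j\<in>S. \<bar>Oi i j\<bar>)"
  define C where "C = (KO + 1) * (KW + l2) / l2"
  have C: "C \<ge> 0" unfolding C_def KW_def KO_def using l2
    by (intro divide_nonneg_pos mult_nonneg_nonneg add_nonneg_nonneg sum_nonneg) auto
  define BW where "BW = (\<lambda>n. \<Union>p\<in>S\<times>S. {\<omega>\<in>space M. dist (Wt n \<omega> (fst p) (snd p)) (W (fst p) (snd p)) > l2 / k})"
  define BO where "BO = (\<lambda>n. \<Union>p\<in>S\<times>S. {\<omega>\<in>space M. dist (Oh n \<omega> (fst p) (snd p)) (Oi (fst p) (snd p)) > 1 / k})"
  have BW0: "(\<lambda>n. outer_prob M (BW n)) \<longlonglongrightarrow> 0" unfolding BW_def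
    by (rule tendsto_outer_UN[OF fin]) (use Wc l2 k in \<open>auto simp: conv_in_prob_def\<close>)
  have BO0: "(\<lambda>n. outer_prob M (BO n)) \<longlonglongrightarrow> 0" unfolding BO_def
    by (rule tendsto_outer_UN[OF fin]) (use Oc k in \<open>auto simp: conv_in_prob_def\<close>)
  have key: "norm (X n \<omega>) > R"
    if \<omega>: "\<omega> \<in> space M" "\<bar>real n * quad_on S (u1 n \<omega>) (Oh n \<omega>)\<bar> > c n" "\<omega> \<notin> BW n" "\<omega> \<notin> BO n"
      and R: "R \<ge> 0" "c n \<ge> C * R\<^sup>2" for n \<omega> R
  proof (rule ccontr)
    assume "\<not> norm (X n \<omega>) > R"
    then have "(norm (X n \<omega>))\<^sup>2 \<le> R\<^sup>2" using R by (intro power_mono) auto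
    then have nX: "real n * (norm (u0 n \<omega>))\<^sup>2 \<le> R\<^sup>2" using X by simp
    have dW: "(\<Sum>i\<in>S. \<Sum>j\<in>S. \<bar>Wt n \<omega> i j - W i j\<bar>) \<le> l2"
    proof -
      have "(\<Sum>i\<in>S. \<Sum>j\<in>S. \<bar>Wt n \<omega> i j - W i j\<bar>) \<le> real (card S) * (real (card S) * (l2 / k))"
        by (rule sum2_bound) (use \<omega> in \<open>auto simp: BW_def dist_real_def not_less\<close>)
      also have "\<dots> = l2" using k S unfolding k_def by simp
      finally show ?thesis .
    qed
    have dO: "(\<Sum>i\<in>S. \<Sum>j\<in>S. \<bar>Oh n \<omega> i j - Oi i j\<bar>) \<le> 1"
    proof -
      have "(\<Sum>i\<in>S. \<Sum>j\<in>S. \<bar>Oh n \<omega> i j - Oi i j\<bar>) \<le> real (card S) * (real (card S) * (1 / k))"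
        by (rule sum2_bound) (use \<omega> in \<open>auto simp: BO_def dist_real_def not_less\<close>)
      also have "\<dots> = 1" using k S unfolding k_def by simp
      finally show ?thesis .
    qed
    have b: "\<bar>quad_on S (u1 n \<omega>) (Oh n \<omega>)\<bar> \<le> C * nS S (u0 n \<omega>)"
      using det_bound[OF l2 dW dO am[OF \<omega>(1)]] unfolding C_def KW_def KO_def by simp
    have "\<bar>real n * quad_on S (u1 n \<omega>) (Oh n \<omega>)\<bar> = real n * \<bar>quad_on S (u1 n \<omega>) (Oh n \<omega>)\<bar>"
      by (simp add: abs_mult)
    also have "\<dots> \<le> real n * (C * nS S (u0 n \<omega>))" by (intro mult_left_mono b) auto
    also have "\<dots> \<le> real n * (C * (norm (u0 n \<omega>))\<^sup>2)"
      by (intro mult_left_mono nS_le_norm C) auto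
    also have "\<dots> = C * (real n * (norm (u0 n \<omega>))\<^sup>2)" by simp
    also have "\<dots> \<le> C * R\<^sup>2" by (intro mult_left_mono nX C)
    finally show False using \<omega>(2) R by linarith
  qed
  show ?thesis
  proof (rule eps_tendsto[OF outer_prob_nonneg])
    fix e :: real assume e: "e > 0"
    obtain R where R: "R \<ge> 0" "eventually (\<lambda>n. outer_prob M {\<omega>\<in>space M. norm (X n \<omega>) > R} \<le> e/2) sequentially"
      using tight[of "e/2"] e by auto
    have ev1: "eventually (\<lambda>n. outer_prob M (BW n) + outer_prob M (BO n) < e/2) sequentially"
      using tendsto_add[OF BW0 BO0] e by (intro order_tendstoD(2)) auto
    have ev2: "eventually (\<lambda>n. c n \<ge> C * R\<^sup>2) sequentially"
      using c by (simp add: filterlim_at_top)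
    show "eventually (\<lambda>n. outer_prob M {\<omega>\<in>space M. \<bar>real n * quad_on S (u1 n \<omega>) (Oh n \<omega>)\<bar> > c n} \<le> e) sequentially"
      using ev1 ev2 R(2)
    proof eventually_elim
      case (elim n)
      have sub: "{\<omega>\<in>space M. \<bar>real n * quad_on S (u1 n \<omega>) (Oh n \<omega>)\<bar> > c n}
          \<subseteq> (BW n \<union> BO n) \<union> {\<omega>\<in>space M. norm (X n \<omega>) > R}"
        using key R(1) elim(2) by blast
      have "outer_prob M {\<omega>\<in>space M. \<bar>real n * quad_on S (u1 n \<omega>) (Oh n \<omega>)\<bar> > c n}
          \<le> outer_prob M ((BW n \<union> BO n) \<union> {\<omega>\<in>space M. norm (X n \<omega>) > R})"
        by (rule outer_prob_mono[OF sub])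
      also have "\<dots> \<le> outer_prob M (BW n \<union> BO n) + outer_prob M {\<omega>\<in>space M. norm (X n \<omega>) > R}"
        by (rule outer_prob_Un[OF fin])
      also have "\<dots> \<le> outer_prob M (BW n) + outer_prob M (BO n) + outer_prob M {\<omega>\<in>space M. norm (X n \<omega>) > R}"
        using outer_prob_Un[OF fin, of "BW n" "BO n"] by linarith
      finally show ?case using elim by linarith
    qed
  qed
qed



theorem theorem10:
  fixes M :: "'a measure"
    and Z :: "nat \<Rightarrow> nat \<Rightarrow> 'a \<Rightarrow> 'z::euclidean_space"
    and PZ :: "'z measure"
    and f :: "'z \<Rightarrow> real^'r \<Rightarrow> real^'m"
    and Df :: "'z \<Rightarrow> real^'r \<Rightarrow> real^'r^'m"
    and Theta :: "(real^'r) set" and theta0 :: "real^'r"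
    and G :: "'m set" and tau :: "real^'m"
    and Omega :: "'m \<Rightarrow> 'm \<Rightarrow> real" and L :: "(real^'m) measure"
    and SS :: "'m set set"
    and Wt :: "'m set \<Rightarrow> nat \<Rightarrow> 'a \<Rightarrow> 'm \<Rightarrow> 'm \<Rightarrow> real"
    and W :: "'m set \<Rightarrow> 'm \<Rightarrow> 'm \<Rightarrow> real"
    and thetah :: "'m set \<Rightarrow> nat \<Rightarrow> 'a \<Rightarrow> real^'r"
    and Omh :: "'m set \<Rightarrow> nat \<Rightarrow> 'a \<Rightarrow> 'm \<Rightarrow> 'm \<Rightarrow> real"
    and Omi :: "'m set \<Rightarrow> 'm \<Rightarrow> 'm \<Rightarrow> real"
    and hh :: "real \<Rightarrow> real" and kappa :: "nat \<Rightarrow> real"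
  assumes M: "prob_space M"
    and PZ: "prob_space PZ" "sets PZ = sets borel"
    and Z_meas: "\<And>n i. i < n \<Longrightarrow> Z n i \<in> borel_measurable M"
    and f_meas: "\<And>\<theta>. (\<lambda>z. f z \<theta>) \<in> borel_measurable borel"
    and f_int: "\<And>\<theta>. integrable PZ (\<lambda>z. f z \<theta>)"
    and f_sq_int: "\<And>i. integrable PZ (\<lambda>z. (f z theta0 $ i)\<^sup>2)"
    and Z_law: "\<And>i. conv_in_dist M (\<lambda>n. Z n i) PZ"
    and UI: "unif_integrable M (\<lambda>(n, i) \<omega>. f (Z n i \<omega>) theta0) {(n, i). i < n}"
    and mean: "\<And>n i. i < n \<Longrightarrow> (\<integral>\<omega>. f (Z n i \<omega>) theta0 \<partial>M) = (1 / sqrt (real n)) *\<^sub>R tau"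
    and tau_G: "\<forall>j\<in>G. tau $ j = 0"
    and Theta: "compact Theta" "theta0 \<in> interior Theta"
    and Ef_cont: "continuous_on Theta (\<lambda>\<theta>. \<integral>z. f z \<theta> \<partial>PZ)"
    and ULLN: "\<forall>e>0. (\<lambda>n. outer_prob M
                 {\<omega> \<in> space M. \<exists>\<theta>\<in>Theta. norm (sample_mom Z f n \<omega> \<theta> - (\<integral>z. f z \<theta> \<partial>PZ)) > e}) \<longlonglongrightarrow> 0"
    and diff: "\<exists>N. open N \<and> theta0 \<in> N \<and>
                 (\<forall>\<theta>\<in>N. integrable PZ (\<lambda>z. Df z \<theta>)) \<and>
                 (AE z in PZ. \<forall>\<theta>\<in>N. (f z has_derivative (\<lambda>d. Df z \<theta> *v d)) (at \<theta>)) \<and>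
                 (\<forall>n i. i < n \<longrightarrow> (AE \<omega> in M. \<forall>\<theta>\<in>N.
                    (f (Z n i \<omega>) has_derivative (\<lambda>d. Df (Z n i \<omega>) \<theta> *v d)) (at \<theta>))) \<and>
                 (\<forall>e>0. (\<lambda>n. outer_prob M {\<omega> \<in> space M. \<exists>\<theta>\<in>N.
                    norm (sample_mom Z Df n \<omega> \<theta> - (\<integral>z. Df z \<theta> \<partial>PZ)) > e})
                    \<longlonglongrightarrow> 0)"
    and CLT: "gaussian_vec L tau Omega" "conv_in_dist M (\<lambda>n \<omega>. sqrt (real n) *\<^sub>R sample_mom Z f n \<omega> theta0) L"
    and SS_full: "UNIV \<in> SS"
    and SS_card: "\<forall>S\<in>SS. card S > CARD('r)"
    and W_conv: "\<forall>S\<in>SS. \<forall>i\<in>S. \<forall>j\<in>S. conv_in_prob M (\<lambda>n \<omega>. Wt S n \<omega> i j) (W S i j)"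
    and W_pd: "\<forall>S\<in>SS. pos_def_on S (W S)"
    and ident: "\<forall>S\<in>SS. \<forall>\<theta>\<in>Theta.
                  (\<forall>i\<in>S. (\<Sum>j\<in>S. W S i j * (\<integral>z. f z \<theta> \<partial>PZ) $ j) = 0) \<longleftrightarrow> \<theta> = theta0"
    and FWF: "\<forall>S\<in>SS. invertible (\<chi> k l. \<Sum>i\<in>S. \<Sum>j\<in>S. (\<integral>z. Df z theta0 \<partial>PZ) $ i $ k * W S i j * (\<integral>z. Df z theta0 \<partial>PZ) $ j $ l)"
    and argmin: "\<forall>S\<in>SS. \<forall>n. \<forall>\<omega>\<in>space M. thetah S n \<omega> \<in> Theta \<and>
                   (\<forall>\<theta>\<in>Theta. quad_on S (sample_mom Z f n \<omega> (thetah S n \<omega>)) (Wt S n \<omega>)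
                                      \<le> quad_on S (sample_mom Z f n \<omega> \<theta>) (Wt S n \<omega>))"
    and Om_pd: "\<forall>S\<in>SS. pos_def_on S (cov_mat PZ (\<lambda>z. f z theta0))"
    and Omi_inv: "\<forall>S\<in>SS. \<forall>i\<in>S. \<forall>k\<in>S. (\<Sum>j\<in>S. cov_mat PZ (\<lambda>z. f z theta0) i j * Omi S j k) = (if i = k then 1 else 0)"
    and Omh_conv: "\<forall>S\<in>SS. \<forall>i\<in>S. \<forall>j\<in>S. conv_in_prob M (\<lambda>n \<omega>. Omh S n \<omega> i j) (Omi S i j)"
    and hh: "strict_mono hh"
    and kappa_inf: "filterlim kappa at_top sequentially"
    and kappa_o: "(\<lambda>n. kappa n / real n) \<longlonglongrightarrow> 0"
  shows "(\<lambda>n. outer_prob M {\<omega> \<in> space M.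
            \<not> (\<forall>S\<in>SS. S \<noteq> UNIV \<longrightarrow> real n * quad_on UNIV (sample_mom Z f n \<omega> (thetah UNIV n \<omega>)) (Omh UNIV n \<omega>)
                  - hh (real (card (UNIV::'m set))) * kappa n
               < real n * quad_on S (sample_mom Z f n \<omega> (thetah S n \<omega>)) (Omh S n \<omega>)
                  - hh (real (card S)) * kappa n)}) \<longlonglongrightarrow> 0"
proof -
  have fin: "finite_measure M" using M by (simp add: prob_space_def)
  define X where "X = (\<lambda>n \<omega>. sqrt (real n) *\<^sub>R sample_mom Z f n \<omega> theta0)"
  have Xm: "X n \<in> borel_measurable M" for n
  proof -
    have "(\<lambda>\<omega>. \<Sum>i<n. f (Z n i \<omega>) theta0) \<in> borel_measurable M"
      by (intro borel_measurable_sum measurable_compose[OF Z_meas f_meas]) auto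
    then show ?thesis unfolding X_def sample_mom_def by (intro borel_measurable_scaleR) auto
  qed
  have tight': "\<exists>R\<ge>0. eventually (\<lambda>n. outer_prob M {\<omega>\<in>space M. norm (X n \<omega>) > R} \<le> e) sequentially"
    if e: "e > 0" for e
  proof -
    obtain R where R: "R \<ge> 0" "eventually (\<lambda>n. measure M {\<omega>\<in>space M. norm (X n \<omega>) > R} \<le> e) sequentially"
    proof -
      have L1: "prob_space L" "sets L = sets borel" using CLT(1) unfolding gaussian_vec_def by auto
      have L2: "conv_in_dist M X L" using CLT(2) unfolding X_def .
      show ?thesis using tight[OF M L1 Xm L2 e] that by blast
    qed
    show ?thesis
    proof (intro exI[of _ R] conjI R(1))
      show "eventually (\<lambda>n. outer_prob M {\<omega>\<in>space M. norm (X n \<omega>) > R} \<le> e) sequentially"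
        using R(2)
      proof (rule eventually_mono)
        fix n assume "measure M {\<omega>\<in>space M. norm (X n \<omega>) > R} \<le> e"
        moreover have "{\<omega>\<in>space M. norm (X n \<omega>) > R} \<in> sets M" using Xm[of n] by measurable
        ultimately show "outer_prob M {\<omega>\<in>space M. norm (X n \<omega>) > R} \<le> e"
          using outer_prob_meas by (meson order.trans)
      qed
    qed
  qed
  have Xsq: "(norm (X n \<omega>))\<^sup>2 = real n * (norm (sample_mom Z f n \<omega> theta0))\<^sup>2" for n \<omega>
    unfolding X_def by (simp add: power_mult_distrib)
  define d where "d = hh (real CARD('m)) - hh (real CARD('m) - 1)"
  have d: "d > 0" using hh unfolding d_def strict_mono_def by auto
  define c where "c = (\<lambda>n. d * kappa n / 3)"
  have c: "filterlim c at_top sequentially"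
    unfolding filterlim_at_top
  proof
    fix z :: real
    have "eventually (\<lambda>n. kappa n \<ge> 3 * z / d) sequentially"
      using kappa_inf by (simp add: filterlim_at_top)
    then show "eventually (\<lambda>n. c n \<ge> z) sequentially"
      by (rule eventually_mono) (use d in \<open>auto simp: c_def field_simps\<close>)
  qed
  define E where "E = (\<lambda>S n. {\<omega>\<in>space M. \<bar>real n * quad_on S (sample_mom Z f n \<omega> (thetah S n \<omega>)) (Omh S n \<omega>)\<bar> > c n})"
  have EL: "(\<lambda>n. outer_prob M (E S n)) \<longlonglongrightarrow> 0" if S: "S \<in> SS" for S
    unfolding E_def
  proof (rule J_Op[OF M _ _ _ Xsq tight' _ _ c])
    show "S \<noteq> {}" using SS_card S by fastforce
    show "pos_def_on S (W S)" using W_pd S by blast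
    show "\<forall>i\<in>S. \<forall>j\<in>S. conv_in_prob M (\<lambda>n \<omega>. Wt S n \<omega> i j) (W S i j)" using W_conv S by blast
    show "\<forall>i\<in>S. \<forall>j\<in>S. conv_in_prob M (\<lambda>n \<omega>. Omh S n \<omega> i j) (Omi S i j)" using Omh_conv S by blast
    have t0: "theta0 \<in> Theta" using Theta(2) interior_subset by blast
    show "\<And>n \<omega>. \<omega> \<in> space M \<Longrightarrow> quad_on S (sample_mom Z f n \<omega> (thetah S n \<omega>)) (Wt S n \<omega>)
                \<le> quad_on S (sample_mom Z f n \<omega> theta0) (Wt S n \<omega>)"
      using argmin S t0 by blast
  qed auto
  have U: "(\<lambda>n. outer_prob M (\<Union>S\<in>SS. E S n)) \<longlonglongrightarrow> 0"
    by (rule tendsto_outer_UN[OF fin]) (auto intro: EL)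
  show ?thesis
  proof (rule tendsto_sandwich[OF _ _ tendsto_const U])
    show "eventually (\<lambda>n. 0 \<le> outer_prob M {\<omega> \<in> space M.
            \<not> (\<forall>S\<in>SS. S \<noteq> UNIV \<longrightarrow> real n * quad_on UNIV (sample_mom Z f n \<omega> (thetah UNIV n \<omega>)) (Omh UNIV n \<omega>)
                  - hh (real (card (UNIV::'m set))) * kappa n
               < real n * quad_on S (sample_mom Z f n \<omega> (thetah S n \<omega>)) (Omh S n \<omega>)
                  - hh (real (card S)) * kappa n)}) sequentially"
      by (simp add: outer_prob_nonneg)
    have evk: "eventually (\<lambda>n. kappa n > 0) sequentially"
      using kappa_inf by (simp add: filterlim_at_top_dense)
    show "eventually (\<lambda>n. outer_prob M {\<omega> \<in> space M.
            \<not> (\<forall>S\<in>SS. S \<noteq> UNIV \<longrightarrow> real n * quad_on UNIV (sample_mom Z f n \<omega> (thetah UNIV n \<omega>)) (Omh UNIV n \<omega>)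
                  - hh (real (card (UNIV::'m set))) * kappa n
               < real n * quad_on S (sample_mom Z f n \<omega> (thetah S n \<omega>)) (Omh S n \<omega>)
                  - hh (real (card S)) * kappa n)} \<le> outer_prob M (\<Union>S\<in>SS. E S n)) sequentially"
      using evk
    proof (rule eventually_mono)
      fix n assume kn: "kappa n > 0"
      show "outer_prob M {\<omega> \<in> space M.
            \<not> (\<forall>S\<in>SS. S \<noteq> UNIV \<longrightarrow> real n * quad_on UNIV (sample_mom Z f n \<omega> (thetah UNIV n \<omega>)) (Omh UNIV n \<omega>)
                  - hh (real (card (UNIV::'m set))) * kappa n
               < real n * quad_on S (sample_mom Z f n \<omega> (thetah S n \<omega>)) (Omh S n \<omega>)
                  - hh (real (card S)) * kappa n)} \<le> outer_prob M (\<Union>S\<in>SS. E S n)"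
      proof (rule outer_prob_mono, rule subsetI)
        fix \<omega> assume "\<omega> \<in> {\<omega> \<in> space M.
            \<not> (\<forall>S\<in>SS. S \<noteq> UNIV \<longrightarrow> real n * quad_on UNIV (sample_mom Z f n \<omega> (thetah UNIV n \<omega>)) (Omh UNIV n \<omega>)
                  - hh (real (card (UNIV::'m set))) * kappa n
               < real n * quad_on S (sample_mom Z f n \<omega> (thetah S n \<omega>)) (Omh S n \<omega>)
                  - hh (real (card S)) * kappa n)}"
        then obtain S where \<omega>: "\<omega> \<in> space M" and S: "S \<in> SS" "S \<noteq> UNIV"
          and nl: "\<not> real n * quad_on UNIV (sample_mom Z f n \<omega> (thetah UNIV n \<omega>)) (Omh UNIV n \<omega>)
                  - hh (real (card (UNIV::'m set))) * kappa n
               < real n * quad_on S (sample_mom Z f n \<omega> (thetah S n \<omega>)) (Omh S n \<omega>)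
                  - hh (real (card S)) * kappa n" by blast
        let ?JF = "real n * quad_on UNIV (sample_mom Z f n \<omega> (thetah UNIV n \<omega>)) (Omh UNIV n \<omega>)"
        let ?JS = "real n * quad_on S (sample_mom Z f n \<omega> (thetah S n \<omega>)) (Omh S n \<omega>)"
        have "card S < CARD('m)" using S(2) by (intro psubset_card_mono) auto
        then have "real (card S) \<le> real CARD('m) - 1" by linarith
        then have "hh (real (card S)) \<le> hh (real CARD('m) - 1)"
          using strict_mono_less_eq[OF hh] by blast
        then have "d \<le> hh (real (card (UNIV::'m set))) - hh (real (card S))" unfolding d_def by simp
        then have dk: "d * kappa n \<le> (hh (real (card (UNIV::'m set))) - hh (real (card S))) * kappa n"
          using kn by (intro mult_right_mono) auto
        have dk0: "d * kappa n > 0" using d kn by simp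
        have "?JF - ?JS \<ge> d * kappa n" using nl dk by (simp add: algebra_simps)
        then have "\<bar>?JF\<bar> > c n \<or> \<bar>?JS\<bar> > c n" unfolding c_def using dk0 by linarith
        then show "\<omega> \<in> (\<Union>S\<in>SS. E S n)" using \<omega> S SS_full unfolding E_def by blast
      qed
    qed
  qed
qed


end
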